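(* Let $\mathcal A=\{a_1,\dots,a_n\}\subset\mathbb Z^d$ with $n\ge d+2$ and $d$-dimensional convex hull, and let $\Delta=\{a_{i_1},\dots,a_{i_{d+1}}\}$ be a $d$-simplex of $\mathcal A$ with index set $I=\{i_1<\dots<i_{d+1}\}$. Then the cone $\mathcal C_\Delta$ of all height vectors $h\in\mathbb R^n$ inducing a regular subdivision of $\mathcal A$ that contains $\Delta$ (as a cell) is \[ \mathcal C_\Delta=\{h\in\mathbb R^n:\ \langle d_I\cdot m^I_i,h\rangle=d_I\cdot d_{I\cup\{i\}}(h)>0\ \text{ for all } i\notin I\}, \] and the $n-(d+1)$ vectors $d_I\cdot m^I_i$, $i\notin I$, form a basis of the kernel of the matrix $A$.
   Context: Let $A\in\mathbb Z^{(d+1)\times n}$ be the matrix whose $j$-th column is $(1,a_j)^t$, and for $h\in\mathbb R^n$ let $A_h\in\mathbb R^{(d+2)\times n}$ be $A$ with the extra last row $(h_1,\dots,h_n)$. A $d$-simplex of $\mathcal A$ is a subset of $d+1$ affinely independent points of $\mathcal A$. $d_I$ is the determinant of the $(d+1)\times(d+1)$ submatrix of $A$ with columns indexed by $I$ (nonzero). For $i\notin I$, $d_{I\cup\{i\}}(h)$ is the determinant of the $(d+2)\times(d+2)$ submatrix of $A_h$ with columns indexed by $I\cup\{i\}$, multiplied by the sign of the permutation sending the increasingly ordered $I\cup\{i\}$ to $(i_1,\dots,i_{d+1},i)$; it is a linear function of $h$, and $m^I_i\in\mathbb R^n$ denotes the vector with $d_{I\cup\{i\}}(h)=\langle m^I_i,h\rangle$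 for all $h$. Regular subdivisions: for $h\in\mathbb R^n$, lift $a_j$ to $(a_j,h_j)\in\mathbb R^{d+1}$; the lower faces of the convex hull of the lifted points are the faces having an inner normal with positive last coordinate. For each lower face $F$, the set $\{a_j:(a_j,h_j)\in F\}$ is a cell; the collection of cells is the regular subdivision $\Gamma_h$ induced by $h$. "$\Gamma_h$ contains $\Delta$" means $\Delta$ is a cell of $\Gamma_h$. *)

theory Defs
  imports "HOL-Analysis.Analysis" "HOL-Combinatorics.Permutations"
begin

definition ndet :: "nat \<Rightarrow> (nat \<Rightarrow> nat \<Rightarrow> real) \<Rightarrow> real" where
  "ndet k M = (\<Sum>p | p permutes {..<k}. of_int (sign p) * (\<Prod>r<k. M r (p r)))"

definition crd :: "nat \<Rightarrow> 'd::{finite,linorder}" where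
  "crd k = sorted_list_of_set (UNIV :: 'd set) ! k"

definition Amat :: "(nat \<Rightarrow> real^'d::{finite,linorder}) \<Rightarrow> nat \<Rightarrow> nat \<Rightarrow> real" where
  "Amat a r j = (if r = 0 then 1 else a j $ crd (r - 1))"

definition Ahmat :: "(nat \<Rightarrow> real^'d::{finite,linorder}) \<Rightarrow> (nat \<Rightarrow> real) \<Rightarrow> nat \<Rightarrow> nat \<Rightarrow> real" where
  "Ahmat a h r j = (if r \<le> CARD('d) then Amat a r j else h j)"

definition dI :: "(nat \<Rightarrow> real^'d::{finite,linorder}) \<Rightarrow> nat set \<Rightarrow> real" where
  "dI a I = ndet (CARD('d) + 1) (\<lambda>r c. Amat a r (sorted_list_of_set I ! c))"

definition dIi :: "(nat \<Rightarrow> real^'d::{finite,linorder}) \<Rightarrow> nat set \<Rightarrow> nat \<Rightarrow> (nat \<Rightarrow> real) \<Rightarrow> real" where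
  "dIi a I i h = ndet (CARD('d) + 2) (\<lambda>r c. Ahmat a h r ((sorted_list_of_set I @ [i]) ! c))"

(* R^n, realised as functions nat => real vanishing from n on *)
definition Rn :: "nat \<Rightarrow> (nat \<Rightarrow> real) set" where
  "Rn n = {h. \<forall>j\<ge>n. h j = 0}"

definition mIi :: "nat \<Rightarrow> (nat \<Rightarrow> real^'d::{finite,linorder}) \<Rightarrow> nat set \<Rightarrow> nat \<Rightarrow> (nat \<Rightarrow> real)" where
  "mIi n a I i = (THE m. m \<in> Rn n \<and> (\<forall>h. dIi a I i h = (\<Sum>j<n. m j * h j)))"

definition lifted :: "nat \<Rightarrow> (nat \<Rightarrow> real^'d) \<Rightarrow> (nat \<Rightarrow> real) \<Rightarrow> ((real^'d) \<times> real) set" where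
  "lifted n a h = {(a j, h j) | j. j < n}"

definition lower_face :: "((real^'d) \<times> real) set \<Rightarrow> ((real^'d) \<times> real) set \<Rightarrow> bool" where
  "lower_face P F \<longleftrightarrow> F face_of P \<and>
     (\<exists>w t. t > 0 \<and> F = {p \<in> P. \<forall>q \<in> P. inner (w, t) p \<le> inner (w, t) q})"

definition regular_subdivision :: "nat \<Rightarrow> (nat \<Rightarrow> real^'d) \<Rightarrow> (nat \<Rightarrow> real) \<Rightarrow> (real^'d) set set" where
  "regular_subdivision n a h =
     {{a j | j. j < n \<and> (a j, h j) \<in> F} | F. lower_face (convex hull (lifted n a h)) F}"

end

theory Submission
  imports Defs "Jordan_Normal_Form.Determinant"
begin

lemma ndet_det: "ndet k M = Determinant.det (Matrix.mat k k (\<lambda>(r,c). M r c))"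
  unfolding ndet_def Determinant.det_def
  by (auto intro!: sum.cong prod.cong simp: lessThan_atLeast0 permutes_in_image)

lemma crd_surj: "\<exists>r<CARD('d). crd r = (k::'d::{finite,linorder})"
proof -
  let ?xs = "sorted_list_of_set (UNIV :: 'd set)"
  have "k \<in> set ?xs" by simp
  then obtain r where "r < length ?xs" "?xs ! r = k" by (metis in_set_conv_nth)
  moreover have "length ?xs = CARD('d)" by simp
  ultimately show ?thesis unfolding crd_def by auto
qed

definition BM :: "(nat \<Rightarrow> real^'d::{finite,linorder}) \<Rightarrow> nat set \<Rightarrow> real Matrix.mat" where
  "BM a I = Matrix.mat (CARD('d)+1) (CARD('d)+1) (\<lambda>(r,c). Amat a r (sorted_list_of_set I ! c))"

definition MH :: "(nat \<Rightarrow> real^'d::{finite,linorder}) \<Rightarrow> nat set \<Rightarrow> nat \<Rightarrow> (nat \<Rightarrow> real) \<Rightarrow> real Matrix.mat" where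
  "MH a I i h = Matrix.mat (CARD('d)+2) (CARD('d)+2) (\<lambda>(r,c). Ahmat a h r ((sorted_list_of_set I @ [i]) ! c))"

lemma dI_BM: "dI a I = Determinant.det (BM a I)"
  unfolding dI_def BM_def ndet_det ..

lemma dIi_MH: "dIi a I i h = Determinant.det (MH a I i h)"
  unfolding dIi_def MH_def ndet_det ..

lemma MH_carrier: fixes a :: "nat \<Rightarrow> real^'d::{finite,linorder}" shows "MH a I i h \<in> carrier_mat (CARD('d)+2) (CARD('d)+2)"
  unfolding MH_def by simp

lemma BM_carrier: fixes a :: "nat \<Rightarrow> real^'d::{finite,linorder}" shows "BM a I \<in> carrier_mat (CARD('d)+1) (CARD('d)+1)"
  unfolding BM_def by simp

lemma cof_indep:
  fixes a :: "nat \<Rightarrow> real^'d::{finite,linorder}"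
  assumes "c < CARD('d)+2"
  shows "cofactor (MH a I i h) (CARD('d)+1) c = cofactor (MH a I i h') (CARD('d)+1) c"
proof -
  have "mat_delete (MH a I i h) (CARD('d)+1) c = mat_delete (MH a I i h') (CARD('d)+1) c"
    by (rule eq_matI) (auto simp: mat_delete_def MH_def Ahmat_def)
  then show ?thesis unfolding cofactor_def by simp
qed

lemma dIi_expand:
  fixes a :: "nat \<Rightarrow> real^'d::{finite,linorder}"
  shows "dIi a I i h = (\<Sum>c<CARD('d)+2. h ((sorted_list_of_set I @ [i]) ! c) *
            cofactor (MH a I i (\<lambda>_. 0)) (CARD('d)+1) c)"
proof -
  have "dIi a I i h = (\<Sum>c<CARD('d)+2. MH a I i h $$ (CARD('d)+1, c) * cofactor (MH a I i h) (CARD('d)+1) c)"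
    unfolding dIi_MH by (rule laplace_expansion_row[OF MH_carrier]) simp
  also have "\<dots> = (\<Sum>c<CARD('d)+2. h ((sorted_list_of_set I @ [i]) ! c) *
            cofactor (MH a I i (\<lambda>_. 0)) (CARD('d)+1) c)"
    by (rule sum.cong[OF refl], subst cof_indep[where h'="\<lambda>_. 0"], simp_all add: MH_def Ahmat_def)
  finally show ?thesis .
qed

lemma cof_last:
  fixes a :: "nat \<Rightarrow> real^'d::{finite,linorder}"
  assumes "card I = CARD('d)+1"
  shows "cofactor (MH a I i (\<lambda>_. 0)) (CARD('d)+1) (CARD('d)+1) = dI a I"
proof -
  have "mat_delete (MH a I i (\<lambda>_. 0)) (CARD('d)+1) (CARD('d)+1) = BM a I"
    by (rule eq_matI) (auto simp: mat_delete_def MH_def BM_def Ahmat_def nth_append assms)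
  then show ?thesis unfolding cofactor_def dI_BM by simp
qed

lemma sum_if_mult: "(\<Sum>c\<in>A. if P c then f c else 0) * (x::real) = (\<Sum>c\<in>A. if P c then f c * x else 0)"
  unfolding sum_distrib_right by (rule sum.cong) auto

lemma mIi_props:
  fixes a :: "nat \<Rightarrow> real^'d::{finite,linorder}"
  assumes fin: "finite I" and cardI: "card I = CARD('d)+1" and sub: "I \<subseteq> {..<n}"
    and i: "i < n" "i \<notin> I"
  shows "mIi n a I i \<in> Rn n"
    "\<forall>h. dIi a I i h = (\<Sum>j<n. mIi n a I i j * h j)"
    "mIi n a I i i = dI a I"
    "\<forall>j. j \<notin> I \<longrightarrow> j \<noteq> i \<longrightarrow> mIi n a I i j = 0"
    "\<forall>r\<le>CARD('d). (\<Sum>j<n. Amat a r j * mIi n a I i j) = 0"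
proof -
  define L where "L = sorted_list_of_set I @ [i]"
  define Cf where "Cf c = cofactor (MH a I i (\<lambda>_. 0)) (CARD('d)+1) c" for c
  have lenL: "length L = CARD('d)+2" using cardI by (simp add: L_def)
  have LI: "L ! c \<in> I" if "c < CARD('d)+1" for c
  proof -
    have "c < length (sorted_list_of_set I)" using that cardI by simp
    then have "sorted_list_of_set I ! c \<in> set (sorted_list_of_set I)" by (rule nth_mem)
    then show ?thesis using that cardI fin by (simp add: L_def nth_append)
  qed
  have Llast: "L ! (CARD('d)+1) = i" using cardI by (simp add: L_def nth_append)
  have Ln: "L ! c < n" if "c < CARD('d)+2" for c
  proof (cases "c < CARD('d)+1")
    case True then show ?thesis using LI sub by auto
  next
    case False then have "c = CARD('d)+1" using that by simp
    then show ?thesis using Llast i by simp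
  qed
  have exp: "dIi a I i h = (\<Sum>c<CARD('d)+2. h (L ! c) * Cf c)" for h
    unfolding L_def Cf_def by (rule dIi_expand)
  define m where "m j = (if j < n then (\<Sum>c<CARD('d)+2. if L ! c = j then Cf c else 0) else 0)" for j
  have rep: "(\<Sum>j<n. m j * h j) = (\<Sum>c<CARD('d)+2. h (L ! c) * Cf c)" for h
  proof -
    have "(\<Sum>j<n. m j * h j) = (\<Sum>j<n. \<Sum>c<CARD('d)+2. if L ! c = j then Cf c * h j else 0)"
    proof (rule sum.cong[OF refl])
      fix j assume "j \<in> {..<n}"
      then have "j < n" by simp
      then show "m j * h j = (\<Sum>c<CARD('d)+2. if L ! c = j then Cf c * h j else 0)"
        unfolding m_def by (simp only: if_P[OF \<open>j < n\<close>[simplified]] if_True sum_if_mult)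
    qed
    also have "\<dots> = (\<Sum>c<CARD('d)+2. \<Sum>j<n. if L ! c = j then Cf c * h j else 0)"
      by (rule sum.swap)
    also have "\<dots> = (\<Sum>c<CARD('d)+2. h (L ! c) * Cf c)"
      using Ln by (auto intro!: sum.cong)
    finally show ?thesis .
  qed
  have mR: "m \<in> Rn n" by (simp add: Rn_def m_def)
  have mrep: "\<forall>h. dIi a I i h = (\<Sum>j<n. m j * h j)" using exp rep by simp
  have meq: "mIi n a I i = m"
    unfolding mIi_def
  proof (rule the_equality)
    show "m \<in> Rn n \<and> (\<forall>h. dIi a I i h = (\<Sum>j<n. m j * h j))" using mR mrep by simp
  next
    fix m' assume m': "m' \<in> Rn n \<and> (\<forall>h. dIi a I i h = (\<Sum>j<n. m' j * h j))"
    show "m' = m"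
    proof
      fix j
      show "m' j = m j"
      proof (cases "j < n")
        case True
        define e where "e x = (if x = j then 1 else 0::real)" for x
        have "(\<Sum>x<n. m' x * e x) = m' j" "(\<Sum>x<n. m x * e x) = m j"
          using True by (simp_all add: e_def if_distrib cong: if_cong)
        then show ?thesis using m' mrep by metis
      next
        case False then show ?thesis using m' mR by (simp add: Rn_def)
      qed
    qed
  qed
  show "mIi n a I i \<in> Rn n" using meq mR by simp
  show "\<forall>h. dIi a I i h = (\<Sum>j<n. mIi n a I i j * h j)" using meq mrep by simp
  have "m i = (\<Sum>c<CARD('d)+2. if L ! c = i then Cf c else 0)"
    unfolding m_def by (simp only: if_P[OF i(1)] if_True)
  also have "\<dots> = (\<Sum>c<CARD('d)+2. if c = CARD('d)+1 then Cf c else 0)"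
  proof (rule sum.cong[OF refl])
    fix c assume "c \<in> {..<CARD('d)+2}"
    then show "(if L ! c = i then Cf c else 0) = (if c = CARD('d)+1 then Cf c else 0)"
    proof (cases "c < CARD('d)+1")
      case True then show ?thesis using LI[of c] i by auto
    next
      case False then have "c = CARD('d)+1" using \<open>c \<in> {..<CARD('d)+2}\<close> by simp
      then show ?thesis using Llast by simp
    qed
  qed
  also have "\<dots> = Cf (CARD('d)+1)"
  proof -
    have "CARD('d)+1 \<in> {..<CARD('d)+2}" by simp
    then show ?thesis by (simp only: sum.delta[OF finite_lessThan] if_True)
  qed
  also have "\<dots> = dI a I" using cof_last[OF cardI] by (simp add: Cf_def)
  finally show "mIi n a I i i = dI a I" using meq by simp
  show "\<forall>j. j \<notin> I \<longrightarrow> j \<noteq> i \<longrightarrow> mIi n a I i j = 0"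
  proof (intro allI impI)
    fix j assume j: "j \<notin> I" "j \<noteq> i"
    have "L ! c \<noteq> j" if "c < CARD('d)+2" for c
    proof (cases "c < CARD('d)+1")
      case True then show ?thesis using LI[of c] j by auto
    next
      case False then have "c = CARD('d)+1" using that by simp
      then show ?thesis using Llast j by simp
    qed
    then show "mIi n a I i j = 0" unfolding meq m_def by auto
  qed
  show "\<forall>r\<le>CARD('d). (\<Sum>j<n. Amat a r j * mIi n a I i j) = 0"
  proof (intro allI impI)
    fix r assume r: "r \<le> CARD('d)"
    have "(\<Sum>j<n. Amat a r j * mIi n a I i j) = dIi a I i (Amat a r)"
      using mrep meq by (simp add: mult.commute)
    also have "\<dots> = 0" unfolding dIi_MH
    proof (rule det_identical_rows[OF MH_carrier, of r "CARD('d)+1"])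
      show "Matrix.row (MH a I i (Amat a r)) r = Matrix.row (MH a I i (Amat a r)) (CARD('d) + 1)"
        using r by (auto simp: MH_def Ahmat_def)
    qed (use r in auto)
    finally show "(\<Sum>j<n. Amat a r j * mIi n a I i j) = 0" .
  qed
qed

lemma mat_vec_sum:
  assumes "A \<in> carrier_mat k k" "r < k"
  shows "(A *\<^sub>v vec k y) $ r = (\<Sum>c<k. A $$ (r,c) * y c)"
  using assms by (simp add: scalar_prod_def lessThan_atLeast0 Matrix.row_def)

lemma det_nz_inj:
  fixes A :: "real Matrix.mat"
  assumes A: "A \<in> carrier_mat k k" and d: "Determinant.det A \<noteq> 0"
    and y: "\<forall>r<k. (\<Sum>c<k. A $$ (r,c) * y c) = 0"
  shows "\<forall>c<k. y c = 0"
proof -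
  have "A *\<^sub>v vec k y = 0\<^sub>v k"
    by (rule eq_vecI) (use A y mat_vec_sum[OF A] in auto)
  then have "vec k y = 0\<^sub>v k" using det_0_iff_vec_prod_zero[OF A] d vec_carrier by metis
  then show ?thesis by (metis index_vec index_zero_vec(1))
qed

lemma det_z_ker:
  fixes A :: "real Matrix.mat"
  assumes A: "A \<in> carrier_mat k k" and d: "Determinant.det A = 0"
  shows "\<exists>y. (\<exists>c<k. y c \<noteq> 0) \<and> (\<forall>r<k. (\<Sum>c<k. A $$ (r,c) * y c) = 0)"
proof -
  obtain v where v: "v \<in> carrier_vec k" "v \<noteq> 0\<^sub>v k" "A *\<^sub>v v = 0\<^sub>v k"
    using det_0_iff_vec_prod_zero[OF A] d by auto
  have vv: "v = vec k (\<lambda>c. v $ c)" using v(1) by auto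
  show ?thesis
  proof (rule exI[of _ "\<lambda>c. v $ c"], intro conjI allI impI)
    show "\<exists>c<k. v $ c \<noteq> 0"
    proof (rule ccontr)
      assume "\<not> (\<exists>c<k. v $ c \<noteq> 0)"
      then have "v = 0\<^sub>v k" using v(1) by (intro eq_vecI) auto
      then show False using v(2) by simp
    qed
    fix r assume r: "r < k"
    have "(A *\<^sub>v vec k (\<lambda>c. v $ c)) $ r = 0" using v(3) vv r by simp
    then show "(\<Sum>c<k. A $$ (r,c) * v $ c) = 0" using mat_vec_sum[OF A r] by simp
  qed
qed

lemma det_nz_surj:
  fixes A :: "real Matrix.mat"
  assumes A: "A \<in> carrier_mat k k" and d: "Determinant.det A \<noteq> 0"
  shows "\<exists>u. \<forall>r<k. (\<Sum>c<k. A $$ (r,c) * u c) = b r"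
proof -
  define B where "B = adj_mat A"
  have B: "B \<in> carrier_mat k k" "A * B = Determinant.det A \<cdot>\<^sub>m 1\<^sub>m k"
    using adj_mat[OF A] by (auto simp: B_def)
  have AB: "(\<Sum>c<k. A $$ (r,c) * B $$ (c,s)) = (if r = s then Determinant.det A else 0)"
    if "r < k" "s < k" for r s
  proof -
    have "(A * B) $$ (r,s) = (\<Sum>c<k. A $$ (r,c) * B $$ (c,s))"
      using A B(1) that by (simp add: scalar_prod_def lessThan_atLeast0 Matrix.row_def Matrix.col_def)
    moreover have "(A * B) $$ (r,s) = (if r = s then Determinant.det A else 0)"
      unfolding B(2) using that by simp
    ultimately show ?thesis by simp
  qed
  define u where "u c = (\<Sum>s<k. B $$ (c,s) * b s) / Determinant.det A" for c
  show ?thesis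
  proof (intro exI allI impI)
    fix r assume r: "r < k"
    have "(\<Sum>c<k. A $$ (r,c) * u c) = (\<Sum>c<k. \<Sum>s<k. A $$ (r,c) * B $$ (c,s) * b s) / Determinant.det A"
      by (simp add: u_def sum_divide_distrib sum_distrib_left mult.assoc)
    also have "\<dots> = (\<Sum>s<k. (\<Sum>c<k. A $$ (r,c) * B $$ (c,s)) * b s) / Determinant.det A"
      by (subst sum.swap) (simp add: sum_distrib_right)
    also have "\<dots> = (\<Sum>s<k. (if r = s then Determinant.det A * b s else 0)) / Determinant.det A"
    proof -
      have "(\<Sum>s<k. (\<Sum>c<k. A $$ (r,c) * B $$ (c,s)) * b s) = (\<Sum>s<k. (if r = s then Determinant.det A * b s else 0))"
      proof (rule sum.cong[OF refl])
        fix s assume "s \<in> {..<k}"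
        then show "(\<Sum>c<k. A $$ (r,c) * B $$ (c,s)) * b s = (if r = s then Determinant.det A * b s else 0)"
          using AB[OF r, of s] by simp
      qed
      then show ?thesis by simp
    qed
    also have "\<dots> = b r" using r d by simp
    finally show "(\<Sum>c<k. A $$ (r,c) * u c) = b r" .
  qed
qed

lemma L_bij: "finite I \<Longrightarrow> bij_betw (\<lambda>c. sorted_list_of_set I ! c) {..<card I} I"
  unfolding bij_betw_def
proof
  assume "finite I"
  show "inj_on ((!) (sorted_list_of_set I)) {..<card I}"
    by (rule inj_on_nth) auto
  have "(!) (sorted_list_of_set I) ` {0..<length (sorted_list_of_set I)} = set (sorted_list_of_set I)"
    by (subst nth_image) auto
  then show "(!) (sorted_list_of_set I) ` {..<card I} = I" using \<open>finite I\<close>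
    by (simp add: lessThan_atLeast0)
qed

lemma L_surj:
  assumes "finite I" "j \<in> I" shows "\<exists>c<card I. sorted_list_of_set I ! c = j"
proof -
  have "j \<in> (\<lambda>c. sorted_list_of_set I ! c) ` {..<card I}"
    using bij_betw_imp_surj_on[OF L_bij[OF assms(1)]] assms(2) by simp
  then show ?thesis by auto
qed

lemma dI_nz:
  fixes a :: "nat \<Rightarrow> real^'d::{finite,linorder}"
  assumes fin: "finite I" and cardI: "card I = CARD('d)+1" and inj: "inj_on a I"
    and ind: "\<not> affine_dependent (a ` I)"
  shows "dI a I \<noteq> 0"
proof
  assume "dI a I = 0"
  then obtain y where y: "\<exists>c<CARD('d)+1. y c \<noteq> 0"
      "\<forall>r<CARD('d)+1. (\<Sum>c<CARD('d)+1. BM a I $$ (r,c) * y c) = 0"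
    using det_z_ker[OF BM_carrier] dI_BM by metis
  have yr: "(\<Sum>c<CARD('d)+1. Amat a r (sorted_list_of_set I ! c) * y c) = 0" if "r < CARD('d)+1" for r
    using y(2) that by (simp add: BM_def)
  define f where "f c = a (sorted_list_of_set I ! c)" for c
  have bf: "bij_betw f {..<CARD('d)+1} (a ` I)"
    unfolding f_def using bij_betw_trans[OF L_bij[OF fin] inj_on_imp_bij_betw[OF inj]] cardI
    by (simp add: comp_def)
  define U where "U x = y (the_inv_into {..<CARD('d)+1} f x)" for x
  have Uf: "U (f c) = y c" if "c < CARD('d)+1" for c
    unfolding U_def using bf that by (simp add: bij_betw_def the_inv_into_f_f)
  have s1: "sum U (a ` I) = 0"
  proof -
    have "sum U (a ` I) = (\<Sum>c<CARD('d)+1. U (f c))"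
      by (rule sum.reindex_bij_betw[OF bf, symmetric])
    also have "\<dots> = (\<Sum>c<CARD('d)+1. Amat a 0 (sorted_list_of_set I ! c) * y c)"
      using Uf by (simp add: Amat_def)
    also have "\<dots> = 0" using yr by simp
    finally show ?thesis .
  qed
  have s2: "(\<Sum>x\<in>a ` I. U x *\<^sub>R x) = 0"
  proof -
    have "(\<Sum>x\<in>a ` I. U x *\<^sub>R x) = (\<Sum>c<CARD('d)+1. U (f c) *\<^sub>R f c)"
      by (rule sum.reindex_bij_betw[OF bf, symmetric])
    also have "\<dots> = (\<Sum>c<CARD('d)+1. y c *\<^sub>R f c)" using Uf by simp
    also have "\<dots> = 0"
    proof (subst Finite_Cartesian_Product.vec_eq_iff, intro allI)
      fix j :: 'd
      obtain r where r: "r < CARD('d)" "crd r = j" using crd_surj by blast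
      have "(\<Sum>c<CARD('d)+1. Amat a (Suc r) (sorted_list_of_set I ! c) * y c) = 0"
        using yr r by simp
      then show "(\<Sum>c<CARD('d)+1. y c *\<^sub>R f c) $ j = 0 $ j"
        using r by (simp add: sum_component Amat_def f_def mult.commute)
    qed
    finally show ?thesis .
  qed
  obtain c where c: "c < CARD('d)+1" "y c \<noteq> 0" using y(1) by blast
  have "affine_dependent (a ` I)"
    unfolding affine_dependent_explicit
  proof (intro exI conjI)
    show "finite (a ` I)" using fin by simp
    show "a ` I \<subseteq> a ` I" by simp
    show "sum U (a ` I) = 0" by (rule s1)
    show "\<exists>v\<in>a ` I. U v \<noteq> 0"
      using c Uf bf by (metis bij_betwE lessThan_iff)
    show "(\<Sum>x\<in>a ` I. U x *\<^sub>R x) = 0" by (rule s2)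
  qed
  then show False using ind by simp
qed

lemma inner_vec_real: "inner (W::real^'d) x = (\<Sum>k\<in>UNIV. W $ k * x $ k)"
  by (simp add: inner_vec_def)

theorem lemma2p1:
  fixes n :: nat and a :: "nat \<Rightarrow> real^'d::{finite,linorder}" and I :: "nat set"
  assumes integral: "\<forall>j<n. \<forall>k. a j $ k \<in> \<int>"
    and distinct: "inj_on a {..<n}"
    and n_ge: "n \<ge> CARD('d) + 2"
    and fulldim: "aff_dim (a ` {..<n}) = int CARD('d)"
    and I_sub: "I \<subseteq> {..<n}"
    and I_card: "card I = CARD('d) + 1"
    and I_simplex: "\<not> affine_dependent (a ` I)"
  shows "{h \<in> Rn n. a ` I \<in> regular_subdivision n a h} =
           {h \<in> Rn n. \<forall>i \<in> {..<n} - I.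
               (\<Sum>j<n. (dI a I * mIi n a I i j) * h j) = dI a I * dIi a I i h
             \<and> dI a I * dIi a I i h > 0}
         \<and> (\<forall>i \<in> {..<n} - I. (\<lambda>j. dI a I * mIi n a I i j) \<in> Rn n \<and>
            (\<forall>r \<le> CARD('d). (\<Sum>j<n. Amat a r j * (dI a I * mIi n a I i j)) = 0))
         \<and> (\<forall>c. (\<forall>j<n. (\<Sum>i \<in> {..<n} - I. c i * (dI a I * mIi n a I i j)) = 0)
                  \<longrightarrow> (\<forall>i \<in> {..<n} - I. c i = 0))
         \<and> (\<forall>x \<in> Rn n. (\<forall>r \<le> CARD('d). (\<Sum>j<n. Amat a r j * x j) = 0) \<longrightarrow>
              (\<exists>c. \<forall>j<n. x j = (\<Sum>i \<in> {..<n} - I. c i * (dI a I * mIi n a I i j))))"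
proof -
  define D where "D = dI a I"
  define m where "m = mIi n a I"
  have fin: "finite I" using I_sub finite_subset by blast
  have injI: "inj_on a I" using distinct I_sub inj_on_subset by blast
  have D0: "D \<noteq> 0" unfolding D_def by (rule dI_nz[OF fin I_card injI I_simplex])
  have DD: "D * D > 0" using D0 not_real_square_gt_zero by blast
  have mR: "m i \<in> Rn n" and mrep: "\<forall>h. dIi a I i h = (\<Sum>j<n. m i j * h j)"
    and mii: "m i i = D" and m0: "\<forall>j. j \<notin> I \<longrightarrow> j \<noteq> i \<longrightarrow> m i j = 0"
    and mker: "\<forall>r\<le>CARD('d). (\<Sum>j<n. Amat a r j * m i j) = 0"
    if "i \<in> {..<n} - I" for i
    using mIi_props[OF fin I_card I_sub, of i a] that unfolding m_def D_def by auto
  have delta: "(\<Sum>i\<in>{..<n} - I. c i * (D * m i j)) = c j * (D * D)"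
    if "j \<in> {..<n} - I" for c j
  proof -
    have "(\<Sum>i\<in>{..<n} - I. c i * (D * m i j)) = (\<Sum>i\<in>{..<n} - I. if i = j then c j * (D * D) else 0)"
    proof (rule sum.cong[OF refl])
      fix i assume i: "i \<in> {..<n} - I"
      show "c i * (D * m i j) = (if i = j then c j * (D * D) else 0)"
        using mii[OF i] m0[OF i] that by auto
    qed
    also have "\<dots> = c j * (D * D)" using that by (simp add: sum.delta')
    finally show ?thesis .
  qed
  have KL: "dIi a I i h = D * \<phi> i"
    if i: "i \<in> {..<n} - I" and phi: "\<forall>j\<in>I. \<phi> j = 0"
      and hdec: "\<forall>j<n. h j = \<phi> j + u0 + inner W (a j)" for i \<phi> u0 W h
  proof -
    have s0: "(\<Sum>j<n. m i j) = 0" using mker[OF i, rule_format, of 0] by (simp add: Amat_def)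
    have sk: "(\<Sum>j<n. m i j * a j $ k) = 0" for k
    proof -
      obtain r where r: "r < CARD('d)" "crd r = k" using crd_surj by blast
      then show ?thesis using mker[OF i, rule_format, of "Suc r"] by (simp add: Amat_def mult.commute)
    qed
    have sW: "(\<Sum>j<n. m i j * inner W (a j)) = 0"
    proof -
      have "(\<Sum>j<n. m i j * inner W (a j)) = (\<Sum>j<n. \<Sum>k\<in>UNIV. W $ k * (m i j * a j $ k))"
        by (simp add: inner_vec_real sum_distrib_left mult.left_commute)
      also have "\<dots> = (\<Sum>k\<in>UNIV. W $ k * (\<Sum>j<n. m i j * a j $ k))"
        by (subst sum.swap) (simp add: sum_distrib_left)
      also have "\<dots> = 0" using sk by simp
      finally show ?thesis .
    qed
    have sphi: "(\<Sum>j<n. m i j * \<phi> j) = D * \<phi> i"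
    proof -
      have "(\<Sum>j<n. m i j * \<phi> j) = (\<Sum>j<n. if j = i then D * \<phi> i else 0)"
      proof (rule sum.cong[OF refl])
        fix j assume "j \<in> {..<n}"
        show "m i j * \<phi> j = (if j = i then D * \<phi> i else 0)"
          using mii[OF i] m0[OF i] phi by (cases "j \<in> I") auto
      qed
      also have "\<dots> = D * \<phi> i" using i by simp
      finally show ?thesis .
    qed
    have "dIi a I i h = (\<Sum>j<n. m i j * h j)" using mrep[OF i] by simp
    also have "\<dots> = (\<Sum>j<n. m i j * \<phi> j) + u0 * (\<Sum>j<n. m i j) + (\<Sum>j<n. m i j * inner W (a j))"
      using hdec by (simp add: sum.distrib sum_distrib_left distrib_left mult.commute)
    also have "\<dots> = D * \<phi> i" using s0 sW sphi by simp
    finally show ?thesis .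
  qed
  have eqn: "(\<Sum>j<n. (D * m i j) * h j) = D * dIi a I i h" if i: "i \<in> {..<n} - I" for i h
    using mrep[OF i] by (simp add: sum_distrib_left mult.assoc)
  have P2: "\<forall>i \<in> {..<n} - I. (\<lambda>j. D * m i j) \<in> Rn n \<and>
            (\<forall>r \<le> CARD('d). (\<Sum>j<n. Amat a r j * (D * m i j)) = 0)"
  proof (intro ballI conjI allI impI)
    fix i assume i: "i \<in> {..<n} - I"
    show "(\<lambda>j. D * m i j) \<in> Rn n" using mR[OF i] by (simp add: Rn_def)
    fix r assume r: "r \<le> CARD('d)"
    have "(\<Sum>j<n. Amat a r j * (D * m i j)) = D * (\<Sum>j<n. Amat a r j * m i j)"
      by (simp add: sum_distrib_left mult.left_commute)
    then show "(\<Sum>j<n. Amat a r j * (D * m i j)) = 0" using mker[OF i] r by simp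
  qed
  have P3: "\<forall>c. (\<forall>j<n. (\<Sum>i \<in> {..<n} - I. c i * (D * m i j)) = 0)
                  \<longrightarrow> (\<forall>i \<in> {..<n} - I. c i = 0)"
  proof (intro allI impI ballI)
    fix c i assume c: "\<forall>j<n. (\<Sum>i \<in> {..<n} - I. c i * (D * m i j)) = 0" and i: "i \<in> {..<n} - I"
    have "c i * (D * D) = 0" using c[rule_format, of i] delta[OF i, of c] i by simp
    then show "c i = 0" using D0 by simp
  qed
  have P4: "\<forall>x \<in> Rn n. (\<forall>r \<le> CARD('d). (\<Sum>j<n. Amat a r j * x j) = 0) \<longrightarrow>
              (\<exists>c. \<forall>j<n. x j = (\<Sum>i \<in> {..<n} - I. c i * (D * m i j)))"
  proof (intro ballI impI)
    fix x assume xR: "x \<in> Rn n" and xk: "\<forall>r \<le> CARD('d). (\<Sum>j<n. Amat a r j * x j) = 0"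
    define cc where "cc i = x i / (D * D)" for i
    define y where "y j = x j - (\<Sum>i \<in> {..<n} - I. cc i * (D * m i j))" for j
    have y0: "y j = 0" if "j < n" "j \<notin> I" for j
      using delta[of j cc] that D0 by (simp add: y_def cc_def)
    have yk: "(\<Sum>j<n. Amat a r j * y j) = 0" if r: "r \<le> CARD('d)" for r
    proof -
      have "(\<Sum>j<n. Amat a r j * (\<Sum>i \<in> {..<n} - I. cc i * (D * m i j)))
          = (\<Sum>i \<in> {..<n} - I. cc i * D * (\<Sum>j<n. Amat a r j * m i j))"
        by (simp add: sum_distrib_left sum.swap[of _ "{..<n}"] mult.left_commute mult.assoc)
      also have "\<dots> = 0" using mker r by simp
      finally show ?thesis using xk r by (simp add: y_def right_diff_distrib sum_subtractf)
    qed
    have yI: "(\<Sum>c<CARD('d)+1. BM a I $$ (r,c) * y (sorted_list_of_set I ! c)) = 0"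
      if r: "r < CARD('d)+1" for r
    proof -
      have "(\<Sum>c<CARD('d)+1. BM a I $$ (r,c) * y (sorted_list_of_set I ! c))
          = (\<Sum>c<card I. Amat a r (sorted_list_of_set I ! c) * y (sorted_list_of_set I ! c))"
        using r I_card by (simp add: BM_def)
      also have "\<dots> = (\<Sum>j\<in>I. Amat a r j * y j)"
        by (rule sum.reindex_bij_betw[OF L_bij[OF fin]])
      also have "\<dots> = (\<Sum>j<n. Amat a r j * y j)"
        by (rule sum.mono_neutral_left) (use I_sub y0 in auto)
      also have "\<dots> = 0" using yk r by simp
      finally show ?thesis .
    qed
    have yc: "\<forall>c<CARD('d)+1. y (sorted_list_of_set I ! c) = 0"
      by (rule det_nz_inj[OF BM_carrier]) (use D0 yI in \<open>auto simp: D_def dI_BM\<close>)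
    have yall: "y j = 0" if "j < n" for j
    proof (cases "j \<in> I")
      case True
      then obtain c where "c < card I" "sorted_list_of_set I ! c = j"
        using L_surj[OF fin True] by blast
      then show ?thesis using yc I_card by auto
    next
      case False then show ?thesis using y0 that by simp
    qed
    show "\<exists>c. \<forall>j<n. x j = (\<Sum>i \<in> {..<n} - I. c i * (D * m i j))"
      using yall by (intro exI[of _ cc]) (auto simp: y_def)
  qed
  obtain i0 where i0: "i0 \<in> I"
    using I_card by (metis add_is_0 card.empty equals0I one_neq_zero)
  have i0n: "i0 < n" using i0 I_sub by auto
  have P1: "{h \<in> Rn n. a ` I \<in> regular_subdivision n a h} =
           {h \<in> Rn n. \<forall>i \<in> {..<n} - I.
               (\<Sum>j<n. (D * m i j) * h j) = D * dIi a I i h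
             \<and> D * dIi a I i h > 0}"
  proof (rule Set.set_eqI, rule iffI)
    fix h assume "h \<in> {h \<in> Rn n. a ` I \<in> regular_subdivision n a h}"
    then have hR: "h \<in> Rn n" and hreg: "a ` I \<in> regular_subdivision n a h" by auto
    define P where "P = convex hull (lifted n a h)"
    have "\<exists>F. a ` I = {a j | j. j < n \<and> (a j, h j) \<in> F} \<and> lower_face P F"
      using hreg unfolding regular_subdivision_def P_def by (simp only: mem_Collect_eq)
    then obtain F where lf: "lower_face P F"
      and cell: "a ` I = {a j | j. j < n \<and> (a j, h j) \<in> F}" by blast
    have "\<exists>w t. t > 0 \<and> F = {p \<in> P. \<forall>q\<in>P. inner (w,t) p \<le> inner (w,t) q}"
      using lf unfolding lower_face_def by (simp only:)
    then obtain w t where t: "t > 0"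
      and Fdef: "F = {p \<in> P. \<forall>q\<in>P. inner (w,t) p \<le> inner (w,t) q}" by blast
    have inP: "(a j, h j) \<in> P" if "j < n" for j
      unfolding P_def lifted_def by (rule hull_inc) (use that in blast)
    have inF: "(a j, h j) \<in> F \<longleftrightarrow> j \<in> I" if j: "j < n" for j
    proof
      assume "(a j, h j) \<in> F"
      then have "a j \<in> {a j | j. j<n \<and> (a j, h j) \<in> F}" using j by blast
      then have "a j \<in> a ` I" by (subst cell)
      then obtain j' where j': "j' \<in> I" "a j = a j'" by auto
      then have "j' \<in> {..<n}" using I_sub by blast
      then have "j = j'" by (intro inj_onD[OF distinct j'(2)]) (use j in auto)
      then show "j \<in> I" using j' by simp
    next
      assume "j \<in> I" then have "a j \<in> a ` I" by simp
      then have "a j \<in> {a j | j. j<n \<and> (a j, h j) \<in> F}" by (subst cell[symmetric])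
      then obtain j' where j': "j' < n" "a j' = a j" "(a j', h j') \<in> F"
        by (auto simp only: mem_Collect_eq)
      have "j' = j" by (rule inj_onD[OF distinct j'(2)]) (use j' j in auto)
      then show "(a j, h j) \<in> F" using j' by simp
    qed
    define \<psi> where "\<psi> j = inner w (a j) + t * h j" for j
    have psi: "inner (w,t) (a j, h j) = \<psi> j" for j by (simp add: \<psi>_def inner_Pair)
    define c0 where "c0 = \<psi> i0"
    have Fmem: "p \<in> F \<longleftrightarrow> (p \<in> P \<and> (\<forall>q\<in>P. inner (w,t) p \<le> inner (w,t) q))" for p
      unfolding Fdef by (rule mem_Collect_eq)
    have Fj: "\<forall>q\<in>P. \<psi> j \<le> inner (w,t) q" if "j \<in> I" for j
    proof -
      have jn: "j < n" using that I_sub by auto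
      have "(a j, h j) \<in> F" using inF[OF jn] that by (simp only:)
      then have "\<forall>q\<in>P. inner (w,t) (a j, h j) \<le> inner (w,t) q" using Fmem by blast
      then show ?thesis by (simp only: psi)
    qed
    have Fi0: "\<forall>q\<in>P. \<psi> i0 \<le> inner (w,t) q" by (rule Fj[OF i0])
    have psiI: "\<psi> j = c0" if "j \<in> I" for j
    proof -
      have jn: "j < n" using that I_sub by auto
      have "\<psi> j \<le> inner (w,t) (a i0, h i0)" using Fj[OF that] inP[OF i0n] by blast
      then have 1: "\<psi> j \<le> \<psi> i0" by (simp only: psi)
      have "\<psi> i0 \<le> inner (w,t) (a j, h j)" using Fi0 inP[OF jn] by blast
      then have 2: "\<psi> i0 \<le> \<psi> j" by (simp only: psi)
      from 1 2 show ?thesis unfolding c0_def by (rule antisym)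
    qed
    have psiO: "\<psi> j > c0" if "j < n" "j \<notin> I" for j
    proof -
      have "(a j, h j) \<notin> F" using inF[OF that(1)] that(2) by (simp only: simp_thms)
      then have "\<not> (\<forall>q\<in>P. inner (w,t) (a j, h j) \<le> inner (w,t) q)"
        using Fmem inP[OF that(1)] by blast
      then have "\<exists>q\<in>P. inner (w,t) q < \<psi> j" by (simp add: psi not_le \<psi>_def)
      then obtain q where q: "q \<in> P" "inner (w,t) q < \<psi> j" by blast
      have "c0 \<le> inner (w,t) q" using Fi0 q(1) unfolding c0_def by blast
      then show ?thesis using q(2) by linarith
    qed
    show "h \<in> {h \<in> Rn n. \<forall>i \<in> {..<n} - I.
               (\<Sum>j<n. (D * m i j) * h j) = D * dIi a I i h \<and> D * dIi a I i h > 0}"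
    proof (safe)
      show "h \<in> Rn n" by (rule hR)
    next
      fix i assume "i < n" "i \<notin> I"
      then have i: "i \<in> {..<n} - I" by simp
      show "(\<Sum>j<n. (D * m i j) * h j) = D * dIi a I i h" by (rule eqn[OF i])
      define \<phi> where "\<phi> j = (\<psi> j - c0) / t" for j
      have phi: "\<forall>j\<in>I. \<phi> j = 0" using psiI by (simp add: \<phi>_def)
      have hdec: "\<forall>j<n. h j = \<phi> j + c0 / t + inner (- (1/t) *\<^sub>R w) (a j)"
        using t by (auto simp: \<phi>_def \<psi>_def field_simps)
      have "dIi a I i h = D * \<phi> i" by (rule KL[OF i phi hdec])
      moreover have "\<phi> i > 0" using psiO[of i] i t by (simp add: \<phi>_def)
      ultimately show "D * dIi a I i h > 0" using DD by (simp add: mult.assoc[symmetric])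
    qed
  next
    fix h assume "h \<in> {h \<in> Rn n. \<forall>i \<in> {..<n} - I.
               (\<Sum>j<n. (D * m i j) * h j) = D * dIi a I i h \<and> D * dIi a I i h > 0}"
    then have hR: "h \<in> Rn n" and hpos: "\<forall>i \<in> {..<n} - I. D * dIi a I i h > 0" by auto
    have BT: "transpose_mat (BM a I) \<in> carrier_mat (CARD('d)+1) (CARD('d)+1)"
      using BM_carrier[of a I] by simp
    have dBT: "Determinant.det (transpose_mat (BM a I)) \<noteq> 0"
      using D0 det_transpose[OF BM_carrier[of a I]] by (simp add: D_def dI_BM)
    obtain u where u: "\<forall>c<CARD('d)+1. (\<Sum>r<CARD('d)+1. transpose_mat (BM a I) $$ (c,r) * u r)
        = h (sorted_list_of_set I ! c)"
      using det_nz_surj[OF BT dBT, of "\<lambda>c. h (sorted_list_of_set I ! c)"] by blast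
    have uI: "(\<Sum>r<CARD('d)+1. Amat a r j * u r) = h j" if jI: "j \<in> I" for j
    proof -
      obtain c where c: "c < card I" "sorted_list_of_set I ! c = j"
        using L_surj[OF fin jI] by blast
      then show ?thesis using u[rule_format, of c] I_card by (simp add: BM_def)
    qed
    define W :: "real^'d::{finite,linorder}" where "W = (\<chi> k. \<Sum>r<CARD('d). if crd r = k then u (Suc r) else 0)"
    have innW: "inner W (a j) = (\<Sum>r<CARD('d). u (Suc r) * a j $ crd r)" for j
    proof -
      have "inner W (a j) = (\<Sum>k\<in>UNIV. \<Sum>r<CARD('d). if crd r = k then u (Suc r) * a j $ k else 0)"
        by (simp add: inner_vec_real W_def sum_if_mult)
      also have "\<dots> = (\<Sum>r<CARD('d). \<Sum>k\<in>UNIV. if crd r = k then u (Suc r) * a j $ k else 0)"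
        by (rule sum.swap)
      also have "\<dots> = (\<Sum>r<CARD('d). u (Suc r) * a j $ crd r)" by simp
      finally show ?thesis .
    qed
    have uI': "u 0 + inner W (a j) = h j" if "j \<in> I" for j
    proof -
      have "(\<Sum>r<CARD('d)+1. Amat a r j * u r) = Amat a 0 j * u 0 + (\<Sum>r<CARD('d). Amat a (Suc r) j * u (Suc r))"
        by (simp only: Suc_eq_plus1[symmetric] sum.lessThan_Suc_shift)
      then show ?thesis using uI[OF that] innW by (simp add: Amat_def mult.commute)
    qed
    define \<phi> where "\<phi> j = h j - u 0 - inner W (a j)" for j
    have phi0: "\<forall>j\<in>I. \<phi> j = 0"
    proof
      fix j assume "j \<in> I"
      then show "\<phi> j = 0" using uI'[of j] unfolding \<phi>_def by linarith
    qed
    have hdec: "\<forall>j<n. h j = \<phi> j + u 0 + inner W (a j)" by (simp add: \<phi>_def)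
    have phipos: "\<phi> i > 0" if "i < n" "i \<notin> I" for i
    proof -
      have i: "i \<in> {..<n} - I" using that by simp
      have "D * dIi a I i h > 0" using hpos i by blast
      then have "D * (D * \<phi> i) > 0" using KL[OF i phi0 hdec] by simp
      then have "(D * D) * \<phi> i > 0" by (simp add: mult.assoc)
      then show ?thesis using DD by (simp add: zero_less_mult_iff)
    qed
    have phige: "\<phi> j \<ge> 0" if "j < n" for j
      using phipos[OF that] phi0 by (cases "j \<in> I") auto
    have ell: "inner (-W, 1::real) (a j, h j) = \<phi> j + u 0" for j
      by (simp add: inner_Pair \<phi>_def)
    define P where "P = convex hull (lifted n a h)"
    have inP: "(a j, h j) \<in> P" if "j < n" for j
      unfolding P_def lifted_def by (rule hull_inc) (use that in blast)
    have Pge: "\<forall>q\<in>P. inner (-W, 1::real) q \<ge> u 0"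
    proof -
      have "lifted n a h \<subseteq> {q. inner (-W, 1::real) q \<ge> u 0}"
        using phige ell by (auto simp: lifted_def)
      then have "P \<subseteq> {q. inner (-W, 1::real) q \<ge> u 0}"
        unfolding P_def by (rule hull_minimal) (rule convex_halfspace_ge)
      then show ?thesis by auto
    qed
    define F where "F = P \<inter> {p. inner (-W, 1::real) p = u 0}"
    have face: "F face_of P"
      unfolding F_def P_def
      by (rule face_of_Int_supporting_hyperplane_ge[OF convex_convex_hull]) (use Pge P_def in auto)
    have Feq: "F = {p \<in> P. \<forall>q\<in>P. inner (-W, 1::real) p \<le> inner (-W, 1::real) q}"
    proof (rule Set.set_eqI, rule iffI)
      fix p assume "p \<in> F" then show "p \<in> {p \<in> P. \<forall>q\<in>P. inner (-W, 1::real) p \<le> inner (-W, 1::real) q}"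
        using Pge by (auto simp: F_def)
    next
      fix p assume p: "p \<in> {p \<in> P. \<forall>q\<in>P. inner (-W, 1::real) p \<le> inner (-W, 1::real) q}"
      then have "inner (-W, 1::real) p \<le> inner (-W, 1::real) (a i0, h i0)" using inP[OF i0n] by blast
      moreover have "inner (-W, 1::real) (a i0, h i0) = u 0" using ell phi0 i0 by simp
      ultimately show "p \<in> F" using p Pge by (force simp: F_def)
    qed
    have lf: "lower_face P F"
      unfolding lower_face_def using face Feq by (intro conjI exI[of _ "-W"] exI[of _ "1::real"]) auto
    have cellEq: "a ` I = {a j | j. j < n \<and> (a j, h j) \<in> F}"
    proof (rule Set.set_eqI, rule iffI)
      fix x assume "x \<in> a ` I"
      then obtain j where j: "j \<in> I" "x = a j" by auto
      then have "j < n" using I_sub by auto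
      then show "x \<in> {a j | j. j < n \<and> (a j, h j) \<in> F}"
        using j inP ell phi0 by (auto simp: F_def)
    next
      fix x assume "x \<in> {a j | j. j < n \<and> (a j, h j) \<in> F}"
      then obtain j where j: "j < n" "(a j, h j) \<in> F" "x = a j" by auto
      then have "\<phi> j = 0" using ell by (simp add: F_def)
      then have "j \<in> I" using phipos[OF j(1)] by force
      then show "x \<in> a ` I" using j by simp
    qed
    have "a ` I \<in> regular_subdivision n a h"
      unfolding regular_subdivision_def mem_Collect_eq P_def[symmetric]
      by (intro exI[of _ F] conjI cellEq lf)
    then show "h \<in> {h \<in> Rn n. a ` I \<in> regular_subdivision n a h}" using hR by simp
  qed
  show ?thesis using P1 P2 P3 P4 unfolding D_def m_def by simp
qed

end
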